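(* Let $\alpha_n\uparrow\infty$ and for each $n$ let $\pi_n\in\Pi^{\alpha_n}$. Then $\pi_n\to B^*:=\{e_i:1\le i\le m\}$ (i.e., the distance from $\pi_n$ to $B^*$ tends to $0$), where $e_i$ are the unit coordinate vectors of $\mathbb R^m$.
   Context: $\mathcal G=(\mathcal V,\mathcal E)$ is a directed irreducible graph with $|\mathcal V|=m>1$, $\mathcal N(i)=\{j:(i,j)\in\mathcal E\}$, with $i\in\mathcal N(i)$ for all $i$ and $j\in\mathcal N(i)\iff i\in\mathcal N(j)$; $a_{ij}=\mathbb I\{j\in\mathcal N(i)\}$. Rewards $\mu_i>0$. $\mathcal S_m$ is the unit simplex in $\mathbb R^m$. For $\alpha>0$, $f^\alpha_i(x)=(\mu_ix_i)^\alpha$, $\Psi^\alpha(x)=\frac1{2\alpha}\sum_{i,j}a_{ij}f^\alpha_i(x)f^\alpha_j(x)$, and $\Pi^\alpha:=\{\pi\in\mathcal S_m:\pi\text{ is a local maximum of }\Psi^\alpha\text{ on }\mathcal S_m\}$. *)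

theory Defs
  imports "HOL-Analysis.Analysis"
begin

text \<open>Vertices are the elements of a finite type 'n (so m = CARD('n)).
  The graph is given by an adjacency predicate E (E i j iff j is in N(i)).\<close>

definition adj :: "('n \<Rightarrow> 'n \<Rightarrow> bool) \<Rightarrow> 'n \<Rightarrow> 'n \<Rightarrow> real" where
  "adj E i j = (if E i j then 1 else 0)"

definition irreducible_graph :: "('n \<Rightarrow> 'n \<Rightarrow> bool) \<Rightarrow> bool" where
  "irreducible_graph E \<longleftrightarrow> (\<forall>i j. (i, j) \<in> {(a, b). E a b}\<^sup>*)"

definition unit_simplex :: "(real ^ 'n) set" where
  "unit_simplex = {x. (\<forall>i. 0 \<le> x $ i) \<and> (\<Sum>i\<in>UNIV. x $ i) = 1}"

definition f_alpha :: "real \<Rightarrow> ('n \<Rightarrow> real) \<Rightarrow> 'n \<Rightarrow> real ^ 'n \<Rightarrow> real" where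
  "f_alpha \<alpha> \<mu> i x = (\<mu> i * x $ i) powr \<alpha>"

definition Psi :: "('n::finite \<Rightarrow> 'n \<Rightarrow> bool) \<Rightarrow> ('n \<Rightarrow> real) \<Rightarrow> real \<Rightarrow> real ^ 'n \<Rightarrow> real" where
  "Psi E \<mu> \<alpha> x = (1 / (2 * \<alpha>)) *
     (\<Sum>i\<in>UNIV. \<Sum>j\<in>UNIV. adj E i j * f_alpha \<alpha> \<mu> i x * f_alpha \<alpha> \<mu> j x)"

definition local_max_on :: "(real ^ 'n \<Rightarrow> real) \<Rightarrow> (real ^ 'n) set \<Rightarrow> real ^ 'n \<Rightarrow> bool" where
  "local_max_on F S p \<longleftrightarrow> p \<in> S \<and> (\<exists>e>0. \<forall>y\<in>S. dist y p < e \<longrightarrow> F y \<le> F p)"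

definition Pi_alpha :: "('n::finite \<Rightarrow> 'n \<Rightarrow> bool) \<Rightarrow> ('n \<Rightarrow> real) \<Rightarrow> real \<Rightarrow> (real ^ 'n) set" where
  "Pi_alpha E \<mu> \<alpha> = {p. local_max_on (Psi E \<mu> \<alpha>) unit_simplex p}"

definition B_star :: "(real ^ 'n) set" where
  "B_star = {axis i 1 | i. True}"

end

theory Submission imports Defs begin

definition Qf :: "('n::finite \<Rightarrow> 'n \<Rightarrow> bool) \<Rightarrow> ('n \<Rightarrow> real) \<Rightarrow> real" where
  "Qf E w = (\<Sum>j\<in>UNIV. \<Sum>l\<in>UNIV. adj E j l * w j * w l)"

definition Mf :: "('n::finite \<Rightarrow> 'n \<Rightarrow> bool) \<Rightarrow> ('n \<Rightarrow> real) \<Rightarrow> ('n \<Rightarrow> real) \<Rightarrow> real" where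
  "Mf E w d = (\<Sum>j\<in>UNIV. \<Sum>l\<in>UNIV. adj E j l * (w j * d l + d j * w l))"

lemma Qf_expand: "Qf E (\<lambda>j. w j + d j) = Qf E w + Mf E w d + Qf E d"
  unfolding Qf_def Mf_def by (simp add: algebra_simps sum.distrib)

lemma Mf_add: "Mf E w d1 + Mf E w d2 = Mf E w (\<lambda>j. d1 j + d2 j)"
  unfolding Mf_def by (simp add: algebra_simps sum.distrib)

lemma adj_nonneg: "0 \<le> adj E i j" by (simp add: adj_def)

lemma Mf_pos:
  assumes "\<And>j. 0 \<le> w j" "\<And>j. 0 \<le> s j" "0 < s i" "0 < w i" "E i i"
  shows "0 < Mf E w s"
proof -
  have nn: "\<And>j l. 0 \<le> adj E j l * (w j * s l + s j * w l)"
    using assms(1,2) by (intro mult_nonneg_nonneg add_nonneg_nonneg adj_nonneg) auto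
  have "0 < adj E i i * (w i * s i + s i * w i)"
    using assms by (simp add: adj_def)
  also have "\<dots> \<le> (\<Sum>l\<in>UNIV. adj E i l * (w i * s l + s i * w l))"
    by (rule member_le_sum[where f="\<lambda>l. adj E i l * (w i * s l + s i * w l)"]) (use nn in auto)
  also have "\<dots> \<le> Mf E w s"
    unfolding Mf_def
    by (rule member_le_sum[where f="\<lambda>j. \<Sum>l\<in>UNIV. adj E j l * (w j * s l + s j * w l)"])
       (use nn in \<open>auto intro: sum_nonneg\<close>)
  finally show ?thesis .
qed

lemma Qf_pair_nonneg:
  assumes "i \<noteq> k" "\<And>j. j \<noteq> i \<Longrightarrow> j \<noteq> k \<Longrightarrow> d j = 0" "E i i" "E k k" "E i k \<longleftrightarrow> E k i"
  shows "0 \<le> Qf E d"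
proof -
  have inner: "\<And>j. (\<Sum>l\<in>UNIV. adj E j l * d j * d l) = (\<Sum>l\<in>{i,k}. adj E j l * d j * d l)"
    by (rule sum.mono_neutral_right) (use assms(2) in auto)
  have "Qf E d = (\<Sum>j\<in>{i,k}. \<Sum>l\<in>{i,k}. adj E j l * d j * d l)"
    unfolding Qf_def inner
    by (rule sum.mono_neutral_right) (use assms(2) in auto)
  also have "\<dots> = d i * d i + d k * d k + 2 * adj E i k * d i * d k"
    using assms by (simp add: adj_def)
  also have "\<dots> \<ge> 0"
  proof (cases "E i k")
    case True
    have "0 \<le> (d i + d k)^2" by simp
    then show ?thesis using True by (simp add: adj_def power2_eq_square algebra_simps)
  next
    case False
    then show ?thesis by (simp add: adj_def)
  qed
  finally show ?thesis .
qed

lemma Psi_Qf: "Psi E \<mu> \<alpha> x = 1 / (2 * \<alpha>) * Qf E (\<lambda>j. f_alpha \<alpha> \<mu> j x)"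
  unfolding Psi_def Qf_def ..

lemma sum_axis: "(\<Sum>j\<in>UNIV. axis i (1::real) $ j) = 1"
  by (simp add: axis_def)

lemma norm_axis_diff: "norm (axis i (1::real) - axis k 1) \<le> 2"
proof -
  have "norm (axis i (1::real) - axis k 1) \<le> norm (axis i (1::real)) + norm (axis k (1::real))"
    by (rule norm_triangle_ineq4)
  then show ?thesis by (simp)
qed
lemma powr_strict_mid:
  fixes p t a :: real
  assumes "0 < t" "t < p" "1 < a"
  shows "2 * p powr a < (p+t) powr a + (p-t) powr a"
proof -
  let ?f = "\<lambda>x. (p+x) powr a + (p-x) powr a"
  have "?f 0 < ?f t"
  proof (rule DERIV_pos_imp_increasing_open[OF assms(1)])
    fix x assume x: "0 < x" "x < t"
    have d1: "DERIV (\<lambda>x. (p+x) powr a) x :> a * (p+x) powr (a - of_nat 1) * 1"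
      by (rule DERIV_fun_powr) (use x assms in \<open>auto intro!: derivative_eq_intros\<close>)
    have d2: "DERIV (\<lambda>x. (p-x) powr a) x :> a * (p-x) powr (a - of_nat 1) * (-1)"
      by (rule DERIV_fun_powr) (use x assms in \<open>auto intro!: derivative_eq_intros\<close>)
    have "(p-x) powr (a-1) < (p+x) powr (a-1)"
      using x assms by (intro powr_less_mono2) auto
    then show "\<exists>y. DERIV ?f x :> y \<and> y > 0"
      using DERIV_add[OF d1 d2] assms by (intro exI[of _ "a * (p+x) powr (a - of_nat 1) * 1 + a * (p-x) powr (a - of_nat 1) * (-1)"]) (auto simp: algebra_simps)
  next
    show "continuous_on {0..t} ?f"
      using assms by (auto intro!: continuous_intros)
  qed
  then show ?thesis by simp
qed

lemma coord_strict_mid: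
  fixes m p t a :: real
  assumes "0 < m" "0 < t" "t < p" "1 < a"
  shows "0 < (m * (p+t)) powr a + (m * (p-t)) powr a - 2 * (m*p) powr a"
proof -
  have "m powr a * (2 * p powr a) < m powr a * ((p+t) powr a + (p-t) powr a)"
    using powr_strict_mid[OF assms(2-4)] assms(1) by simp
  moreover have "(m * (p+t)) powr a = m powr a * (p+t) powr a" "(m * (p-t)) powr a = m powr a * (p-t) powr a"
    "(m * p) powr a = m powr a * p powr a"
    using assms by (simp_all add: powr_mult)
  ultimately show ?thesis by (simp add: algebra_simps)
qed

lemma no_two_pos:
  fixes E :: "'n::finite \<Rightarrow> 'n \<Rightarrow> bool" and \<mu> :: "'n \<Rightarrow> real" and p :: "real ^ 'n"
  assumes "1 < \<alpha>" "\<And>i. E i i" "\<And>i j. E i j \<longleftrightarrow> E j i" "\<And>i. \<mu> i > 0"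
    and "p \<in> Pi_alpha E \<mu> \<alpha>" and "i \<noteq> k" and pi: "0 < p $ i" and pk: "0 < p $ k"
  shows False
proof -
  from assms(5) obtain e where S: "p \<in> unit_simplex" and e: "e > 0"
    and lm: "\<And>y. y \<in> unit_simplex \<Longrightarrow> dist y p < e \<Longrightarrow> Psi E \<mu> \<alpha> y \<le> Psi E \<mu> \<alpha> p"
    unfolding Pi_alpha_def local_max_on_def by blast
  define t where "t = min (e/4) (min (p$i/2) (p$k/2))"
  have t: "0 < t" "t < p$i" "t < p$k" "t < e/2"
    using e pi pk by (auto simp: t_def)
  define y where "y s = p + s *\<^sub>R (axis i 1 - axis k 1)" for s
  have ycomp: "y s $ j = p $ j + s * ((if j = i then 1 else 0) - (if j = k then 1 else 0))" for s j
    by (simp add: y_def axis_def)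
  have yin: "y s \<in> unit_simplex" if "\<bar>s\<bar> \<le> t" for s
  proof -
    have "0 \<le> y s $ j" for j
      using that t S unfolding ycomp unit_simplex_def by auto
    moreover have "(\<Sum>j\<in>UNIV. y s $ j) = 1"
    proof -
      have "(\<Sum>j\<in>UNIV. y s $ j) = (\<Sum>j\<in>UNIV. p $ j) + s * ((\<Sum>j\<in>UNIV. axis i (1::real) $ j) - (\<Sum>j\<in>UNIV. axis k (1::real) $ j))"
        by (simp add: y_def sum.distrib sum_distrib_left sum_subtractf algebra_simps)
      then show ?thesis using S by (simp add: sum_axis unit_simplex_def)
    qed
    ultimately show ?thesis by (simp add: unit_simplex_def)
  qed
  have ydist: "dist (y s) p < e" if "\<bar>s\<bar> \<le> t" for s
  proof -
    have "dist (y s) p = \<bar>s\<bar> * norm (axis i (1::real) - axis k 1)"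
      by (simp add: y_def dist_norm)
    also have "\<dots> \<le> \<bar>s\<bar> * 2" by (rule mult_left_mono[OF norm_axis_diff]) simp
    also have "\<dots> < e" using that t by simp
    finally show ?thesis .
  qed
  define w where "w j = f_alpha \<alpha> \<mu> j p" for j
  define d1 where "d1 j = f_alpha \<alpha> \<mu> j (y t) - w j" for j
  define d2 where "d2 j = f_alpha \<alpha> \<mu> j (y (-t)) - w j" for j
  have fy1: "(\<lambda>j. f_alpha \<alpha> \<mu> j (y t)) = (\<lambda>j. w j + d1 j)" by (simp add: d1_def)
  have fy2: "(\<lambda>j. f_alpha \<alpha> \<mu> j (y (-t))) = (\<lambda>j. w j + d2 j)" by (simp add: d2_def)
  have dz1: "d1 j = 0" if "j \<noteq> i" "j \<noteq> k" for j
    using that by (simp add: d1_def w_def f_alpha_def ycomp)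
  have dz2: "d2 j = 0" if "j \<noteq> i" "j \<noteq> k" for j
    using that by (simp add: d2_def w_def f_alpha_def ycomp)
  have wnn: "0 \<le> w j" for j by (simp add: w_def f_alpha_def)
  have wi: "0 < w i" using pi assms(4)[of i] by (simp add: w_def f_alpha_def)
  have si: "0 < d1 i + d2 i"
    using coord_strict_mid[OF assms(4)[of i] t(1) t(2) assms(1)] assms(6)
    by (simp add: d1_def d2_def w_def f_alpha_def ycomp)
  have sk: "0 < d1 k + d2 k"
    using coord_strict_mid[OF assms(4)[of k] t(1) t(3) assms(1)] assms(6)
    by (simp add: d1_def d2_def w_def f_alpha_def ycomp algebra_simps)
  have snn: "0 \<le> d1 j + d2 j" for j
    using si sk dz1 dz2 by (cases "j = i"; cases "j = k") auto
  have Mpos: "0 < Mf E w (\<lambda>j. d1 j + d2 j)"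
    by (rule Mf_pos[where i=i]) (use wnn snn si wi assms(2) in auto)
  have Q1: "0 \<le> Qf E d1" by (rule Qf_pair_nonneg[OF assms(6)]) (use dz1 assms(2,3) in auto)
  have Q2: "0 \<le> Qf E d2" by (rule Qf_pair_nonneg[OF assms(6)]) (use dz2 assms(2,3) in auto)
  have "2 * Qf E w < Qf E (\<lambda>j. w j + d1 j) + Qf E (\<lambda>j. w j + d2 j)"
    using Mpos Q1 Q2 Mf_add[of E w d1 d2] by (simp add: Qf_expand)
  then have "2 * Psi E \<mu> \<alpha> p < Psi E \<mu> \<alpha> (y t) + Psi E \<mu> \<alpha> (y (-t))"
    using assms(1) unfolding Psi_Qf fy1 fy2 w_def[symmetric] by (simp add: field_simps)
  moreover have "Psi E \<mu> \<alpha> (y t) \<le> Psi E \<mu> \<alpha> p" "Psi E \<mu> \<alpha> (y (-t)) \<le> Psi E \<mu> \<alpha> p"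
    using lm yin ydist t by auto
  ultimately show False by simp
qed
lemma in_B_star:
  fixes E :: "'n::finite \<Rightarrow> 'n \<Rightarrow> bool" and \<mu> :: "'n \<Rightarrow> real" and p :: "real ^ 'n"
  assumes "1 < \<alpha>" "\<And>i. E i i" "\<And>i j. E i j \<longleftrightarrow> E j i" "\<And>i. \<mu> i > 0"
    and P: "p \<in> Pi_alpha E \<mu> \<alpha>"
  shows "p \<in> B_star"
proof -
  have S: "p \<in> unit_simplex" using P by (simp add: Pi_alpha_def local_max_on_def)
  then have nn: "\<And>j. 0 \<le> p $ j" and s1: "(\<Sum>j\<in>UNIV. p $ j) = 1" by (auto simp: unit_simplex_def)
  obtain i where pi: "0 < p $ i"
  proof (rule ccontr)
    assume "\<not> thesis"
    then have "\<And>j. p $ j = 0" using nn that by (metis order_le_less)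
    then show False using s1 by simp
  qed
  have z: "p $ j = 0" if "j \<noteq> i" for j
    using no_two_pos[OF assms(1-4) P that[symmetric] pi] nn[of j] by (metis order_le_less)
  have "(\<Sum>j\<in>UNIV. p $ j) = p $ i"
    by (rule sum.mono_neutral_right[where S="{i}", simplified]) (use z in auto)
  then have "p $ i = 1" using s1 by simp
  then have "p = axis i 1"
    using z by (auto simp: vec_eq_iff axis_def)
  then show ?thesis by (auto simp: B_star_def)
qed

theorem lemma4:
  fixes E :: "'n::finite \<Rightarrow> 'n \<Rightarrow> bool"
    and \<mu> :: "'n \<Rightarrow> real"
    and \<alpha> :: "nat \<Rightarrow> real"
    and \<pi> :: "nat \<Rightarrow> real ^ 'n"
  assumes "CARD('n) > 1"
    and "\<And>i. E i i"
    and "\<And>i j. E i j \<longleftrightarrow> E j i"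
    and "irreducible_graph E"
    and "\<And>i. \<mu> i > 0"
    and "\<And>n. \<alpha> n > 0"
    and "incseq \<alpha>"
    and "filterlim \<alpha> at_top sequentially"
    and "\<And>n. \<pi> n \<in> Pi_alpha E \<mu> (\<alpha> n)"
  shows "(\<lambda>n. infdist (\<pi> n) B_star) \<longlonglongrightarrow> 0"
proof (rule tendsto_eventually)
  have "eventually (\<lambda>n. 2 \<le> \<alpha> n) sequentially"
    using assms(8) by (simp add: filterlim_at_top)
  then show "eventually (\<lambda>n. infdist (\<pi> n) B_star = 0) sequentially"
  proof (rule eventually_mono)
    fix n assume "2 \<le> \<alpha> n"
    then have "\<pi> n \<in> B_star" by (intro in_B_star[OF _ assms(2,3,5,9)]) auto
    then show "infdist (\<pi> n) B_star = 0" by simp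
  qed
qed
end
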